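(* Let $H$ be a homogeneous relation on a finite set $V$ with $|V|\ge 2$ and let $x\in V$. Let $P_0$ be the partition of $V\setminus\{x\}$ into the equivalence classes of $H_x$. Consider the following refinement rule applied to a partition $P$ of $V\setminus\{x\}$ with a pivot $y\in V\setminus\{x\}$: letting $C(y)$ be the class of $P$ containing $y$, replace every class $C\neq C(y)$ of $P$ by the nonempty sets among $C\cap K$, where $K$ ranges over the equivalence classes of $H_y$. Starting from $P_0$ and applying this rule with arbitrary pivots in an arbitrary order until no application of the rule changes the partition, the final partition equals $MHS(x)$, the partition of $V\setminus\{x\}$ into the inclusion-maximal homogeneous sets not containing $x$.
   Context: $V$ is a finite set. A reflectless triple is a triple $(x,y,z)\in V^3$ with $x\neq y$ and $x\neq z$, written $(x|yz)$. A homogeneous relation $H$ on $V$ is a set of reflectless triples (we write $H(s|xy)$ when $(s|xy)\in H$) such that for every $s\in V$ the binary relation $H_s=\{(x,y): H(s|xy)\}$ is an equivalence relation on $V\setminus\{s\}$. For $X\subseteq V$ and $s\notin X$, $s$ distinguishes $X$ if there are $x,y\in X$ with not $H(s|xy)$. A homogeneous set is a nonempty $M\subseteq V$ such that no element of $V\setminus M$ distinguishes $M$. The inclusion-maximal homogeneous sets not containing $x$ form a partition of $V\setminus\{x\}$, denoted $MHS(x)$. *)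

theory Defs
  imports Main
begin

text \<open>Triples (s,x,y) are written (s|xy) in the paper.  A homogeneous relation on V
is a set of reflectless triples over V such that every H_s is an equivalence
relation on V - {s}.\<close>

definition H_at :: "('a \<times> 'a \<times> 'a) set \<Rightarrow> 'a \<Rightarrow> ('a \<times> 'a) set" where
  "H_at H s = {(a, b). (s, a, b) \<in> H}"

definition reflectless :: "'a set \<Rightarrow> ('a \<times> 'a \<times> 'a) set" where
  "reflectless V = {(s, a, b). s \<in> V \<and> a \<in> V \<and> b \<in> V \<and> s \<noteq> a \<and> s \<noteq> b}"

definition homogeneous_rel :: "'a set \<Rightarrow> ('a \<times> 'a \<times> 'a) set \<Rightarrow> bool" where
  "homogeneous_rel V H \<longleftrightarrow> H \<subseteq> reflectless V \<and> (\<forall>s\<in>V. equiv (V - {s}) (H_at H s))"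

definition distinguishes :: "('a \<times> 'a \<times> 'a) set \<Rightarrow> 'a \<Rightarrow> 'a set \<Rightarrow> bool" where
  "distinguishes H s X \<longleftrightarrow> (\<exists>a\<in>X. \<exists>b\<in>X. (s, a, b) \<notin> H)"

definition homogeneous_set :: "'a set \<Rightarrow> ('a \<times> 'a \<times> 'a) set \<Rightarrow> 'a set \<Rightarrow> bool" where
  "homogeneous_set V H M \<longleftrightarrow> M \<noteq> {} \<and> M \<subseteq> V \<and> (\<forall>s\<in>V - M. \<not> distinguishes H s M)"

definition MHS :: "'a set \<Rightarrow> ('a \<times> 'a \<times> 'a) set \<Rightarrow> 'a \<Rightarrow> 'a set set" where
  "MHS V H x = {M. homogeneous_set V H M \<and> x \<notin> M \<and>
     (\<forall>M'. homogeneous_set V H M' \<and> x \<notin> M' \<and> M \<subseteq> M' \<longrightarrow> M' = M)}"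

definition refine :: "'a set \<Rightarrow> ('a \<times> 'a \<times> 'a) set \<Rightarrow> 'a set set \<Rightarrow> 'a \<Rightarrow> 'a set set" where
  "refine V H P y =
     {C. C \<in> P \<and> y \<in> C} \<union>
     {C \<inter> K | C K. C \<in> P \<and> y \<notin> C \<and> K \<in> (V - {y}) // H_at H y \<and> C \<inter> K \<noteq> {}}"

definition initial_partition :: "'a set \<Rightarrow> ('a \<times> 'a \<times> 'a) set \<Rightarrow> 'a \<Rightarrow> 'a set set" where
  "initial_partition V H x = (V - {x}) // H_at H x"

definition refine_step :: "'a set \<Rightarrow> ('a \<times> 'a \<times> 'a) set \<Rightarrow> 'a \<Rightarrow> 'a set set \<Rightarrow> 'a set set \<Rightarrow> bool" where
  "refine_step V H x P P' \<longleftrightarrow> (\<exists>y \<in> V - {x}. P' = refine V H P y)"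

definition refine_stable :: "'a set \<Rightarrow> ('a \<times> 'a \<times> 'a) set \<Rightarrow> 'a \<Rightarrow> 'a set set \<Rightarrow> bool" where
  "refine_stable V H x P \<longleftrightarrow> (\<forall>y \<in> V - {x}. refine V H P y = P)"

end

theory Submission
  imports Defs
begin

definition inv_P :: "'a set \<Rightarrow> ('a \<times> 'a \<times> 'a) set \<Rightarrow> 'a \<Rightarrow> 'a set set \<Rightarrow> bool" where
  "inv_P V H x P \<longleftrightarrow> (\<forall>C\<in>P. C \<noteq> {}) \<and> (\<forall>C\<in>P. \<forall>C'\<in>P. C \<noteq> C' \<longrightarrow> C \<inter> C' = {})
    \<and> (\<forall>C\<in>P. \<exists>K\<in>(V - {x}) // H_at H x. C \<subseteq> K)
    \<and> (\<forall>M. homogeneous_set V H M \<and> x \<notin> M \<longrightarrow> (\<exists>C\<in>P. M \<subseteq> C))"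

lemma class_in:
  assumes hr: "homogeneous_rel V H" and s: "s \<in> V" and K: "K \<in> (V - {s}) // H_at H s"
    and a: "a \<in> K" and b: "b \<in> K"
  shows "(s, a, b) \<in> H"
proof -
  have eq: "equiv (V - {s}) (H_at H s)" using hr s unfolding homogeneous_rel_def by blast
  from K obtain k where k: "k \<in> V - {s}" "K = H_at H s `` {k}" by (auto elim: quotientE)
  have "(k, a) \<in> H_at H s" "(k, b) \<in> H_at H s" using a b k by auto
  then have "(a, b) \<in> H_at H s" using eq unfolding equiv_def by (meson symE transE)
  then show ?thesis unfolding H_at_def by simp
qed

lemma homog_in_class:
  assumes hr: "homogeneous_rel V H" and s: "s \<in> V" and M: "homogeneous_set V H M" and sM: "s \<notin> M"
  shows "\<exists>K\<in>(V - {s}) // H_at H s. M \<subseteq> K"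
proof -
  from M obtain m where m: "m \<in> M" unfolding homogeneous_set_def by blast
  have MV: "M \<subseteq> V" using M unfolding homogeneous_set_def by blast
  have nd: "\<not> distinguishes H s M" using M s sM unfolding homogeneous_set_def by blast
  let ?K = "H_at H s `` {m}"
  have "?K \<in> (V - {s}) // H_at H s" using m MV sM by (auto intro: quotientI)
  moreover have "M \<subseteq> ?K" using nd m unfolding distinguishes_def H_at_def by auto
  ultimately show ?thesis by blast
qed

lemma inv_init:
  assumes hr: "homogeneous_rel V H" and x: "x \<in> V"
  shows "inv_P V H x (initial_partition V H x)"
proof -
  have eq: "equiv (V - {x}) (H_at H x)" using hr x unfolding homogeneous_rel_def by blast
  show ?thesis unfolding inv_P_def initial_partition_def
    using in_quotient_imp_non_empty[OF eq] quotient_disj[OF eq] homog_in_class[OF hr x]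
    by blast
qed

lemma refine_cases:
  assumes "C \<in> refine V H P y"
  obtains "C \<in> P" "y \<in> C"
  | C0 K where "C = C0 \<inter> K" "C0 \<in> P" "y \<notin> C0" "K \<in> (V - {y}) // H_at H y" "C0 \<inter> K \<noteq> {}"
  using assms unfolding refine_def by blast

lemma refine_I1: "C \<in> P \<Longrightarrow> y \<in> C \<Longrightarrow> C \<in> refine V H P y"
  unfolding refine_def by blast

lemma refine_I2: "C0 \<in> P \<Longrightarrow> y \<notin> C0 \<Longrightarrow> K \<in> (V - {y}) // H_at H y \<Longrightarrow> C0 \<inter> K \<noteq> {}
   \<Longrightarrow> C0 \<inter> K \<in> refine V H P y"
  unfolding refine_def by blast

lemma inv_step:
  assumes hr: "homogeneous_rel V H" and I: "inv_P V H x P" and y: "y \<in> V - {x}"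
  shows "inv_P V H x (refine V H P y)"
proof -
  have yV: "y \<in> V" using y by simp
  have eq: "equiv (V - {y}) (H_at H y)" using hr yV by (simp add: homogeneous_rel_def)
  have neP: "\<forall>C\<in>P. C \<noteq> {}" using I by (simp add: inv_P_def)
  have kxP: "\<forall>C\<in>P. \<exists>K\<in>(V - {x}) // H_at H x. C \<subseteq> K" using I by (simp add: inv_P_def)
  have ne: "\<forall>C\<in>refine V H P y. C \<noteq> {}"
  proof
    fix C assume "C \<in> refine V H P y"
    then show "C \<noteq> {}"
    proof (rule refine_cases)
      assume "C \<in> P" then show ?thesis using neP by blast
    next
      fix C0 K assume "C = C0 \<inter> K" "C0 \<inter> K \<noteq> {}" then show ?thesis by simp
    qed
  qed
  have kx: "\<forall>C\<in>refine V H P y. \<exists>K\<in>(V - {x}) // H_at H x. C \<subseteq> K"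
  proof
    fix C assume "C \<in> refine V H P y"
    then show "\<exists>K\<in>(V - {x}) // H_at H x. C \<subseteq> K"
    proof (rule refine_cases)
      assume "C \<in> P" then show ?thesis using kxP by blast
    next
      fix C0 K assume a: "C = C0 \<inter> K" "C0 \<in> P"
      then obtain K0 where "K0 \<in> (V - {x}) // H_at H x" "C0 \<subseteq> K0" using kxP by blast
      then show ?thesis using a by blast
    qed
  qed
  have dj: "\<forall>C\<in>refine V H P y. \<forall>C'\<in>refine V H P y. C \<noteq> C' \<longrightarrow> C \<inter> C' = {}"
  proof (intro ballI impI)
    fix C C' assume C: "C \<in> refine V H P y" and C': "C' \<in> refine V H P y" and ne: "C \<noteq> C'"
    have dP: "\<forall>C\<in>P. \<forall>C'\<in>P. C \<noteq> C' \<longrightarrow> C \<inter> C' = {}" using I by (simp add: inv_P_def)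
    from C consider (a) "C \<in> P" "y \<in> C" | (b) C0 K where "C = C0 \<inter> K" "C0 \<in> P" "y \<notin> C0"
        "K \<in> (V - {y}) // H_at H y" by (rule refine_cases) blast+
    then show "C \<inter> C' = {}"
    proof cases
      case a
      from C' consider (a') "C' \<in> P" "y \<in> C'" | (b') C0' K' where "C' = C0' \<inter> K'" "C0' \<in> P" "y \<notin> C0'"
        "K' \<in> (V - {y}) // H_at H y" by (rule refine_cases) blast+
      then show ?thesis
      proof cases
        case a' then show ?thesis using a ne dP by blast
      next
        case b'
        then have "C \<noteq> C0'" using a by blast
        then show ?thesis using dP a b' by blast
      qed
    next
      case b
      from C' consider (a') "C' \<in> P" "y \<in> C'" | (b') C0' K' where "C' = C0' \<inter> K'" "C0' \<in> P" "y \<notin> C0'"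
        "K' \<in> (V - {y}) // H_at H y" by (rule refine_cases) blast+
      then show ?thesis
      proof cases
        case a'
        then have "C' \<noteq> C0" using b by blast
        then show ?thesis using dP a' b by blast
      next
        case b'
        show ?thesis
        proof (cases "C0 = C0'")
          case True
          have "K \<noteq> K'"
          proof
            assume "K = K'" then have "C = C'" using b(1) b'(1) True by simp
            then show False using ne by simp
          qed
          then have "K \<inter> K' = {}" using quotient_disj[OF eq b(4) b'(4)] by blast
          then show ?thesis using b b' by blast
        next
          case False then show ?thesis using dP b b' by blast
        qed
      qed
    qed
  qed
  have hm: "\<forall>M. homogeneous_set V H M \<and> x \<notin> M \<longrightarrow> (\<exists>C\<in>refine V H P y. M \<subseteq> C)"
  proof (intro allI impI)
    fix M assume M: "homogeneous_set V H M \<and> x \<notin> M"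
    have hmP: "\<forall>M. homogeneous_set V H M \<and> x \<notin> M \<longrightarrow> (\<exists>C\<in>P. M \<subseteq> C)" using I by (simp add: inv_P_def)
    then obtain C where C: "C \<in> P" "M \<subseteq> C" using M by blast
    show "\<exists>C\<in>refine V H P y. M \<subseteq> C"
    proof (cases "y \<in> C")
      case True
      have "C \<in> refine V H P y" using C(1) True by (rule refine_I1)
      then show ?thesis using C(2) by blast
    next
      case False
      have yM: "y \<notin> M" using C(2) False by blast
      have Mh: "homogeneous_set V H M" using M by simp
      obtain K where K: "K \<in> (V - {y}) // H_at H y" "M \<subseteq> K"
        using homog_in_class[OF hr yV Mh yM] by blast
      have "M \<noteq> {}" using Mh by (simp add: homogeneous_set_def)
      then have "C \<inter> K \<noteq> {}" using K(2) C(2) by blast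
      then have "C \<inter> K \<in> refine V H P y" using C(1) False K(1) by (simp add: refine_I2)
      moreover have "M \<subseteq> C \<inter> K" using C(2) K(2) by blast
      ultimately show ?thesis by blast
    qed
  qed
  show ?thesis by (simp only: inv_P_def) (intro conjI ne dj kx hm)
qed

theorem mainTheorem10:
  fixes V :: "'a set" and H :: "('a \<times> 'a \<times> 'a) set" and x :: 'a and P :: "'a set set"
  assumes "finite V" and "card V \<ge> 2"
    and "homogeneous_rel V H"
    and "x \<in> V"
    and "(refine_step V H x)\<^sup>*\<^sup>* (initial_partition V H x) P"
    and "refine_stable V H x P"
  shows "P = MHS V H x"
proof -
  note hr = assms(3)
  have I: "inv_P V H x P"
    using assms(5)
  proof (induction rule: rtranclp_induct)
    case base then show ?case using inv_init[OF hr assms(4)] .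
  next
    case (step P1 P2)
    from step(2) obtain y where y: "y \<in> V - {x}" "P2 = refine V H P1 y"
      unfolding refine_step_def by blast
    show ?case unfolding y(2) by (rule inv_step[OF hr step(3) y(1)])
  qed
  have eqx: "equiv (V - {x}) (H_at H x)" using hr assms(4) by (simp add: homogeneous_rel_def)
  have dP: "\<forall>C\<in>P. \<forall>C'\<in>P. C \<noteq> C' \<longrightarrow> C \<inter> C' = {}" using I by (simp add: inv_P_def)
  have neP: "\<forall>C\<in>P. C \<noteq> {}" using I by (simp add: inv_P_def)
  have hmP: "\<forall>M. homogeneous_set V H M \<and> x \<notin> M \<longrightarrow> (\<exists>C\<in>P. M \<subseteq> C)" using I by (simp add: inv_P_def)
  have kxP: "\<forall>C\<in>P. \<exists>K\<in>(V - {x}) // H_at H x. C \<subseteq> K" using I by (simp add: inv_P_def)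
  have stab: "\<And>s. s \<in> V - {x} \<Longrightarrow> refine V H P s = P" using assms(6) by (simp add: refine_stable_def)
  have homC: "homogeneous_set V H C" "x \<notin> C" if C: "C \<in> P" for C
  proof -
    obtain K where K: "K \<in> (V - {x}) // H_at H x" "C \<subseteq> K" using kxP C by blast
    have KV: "K \<subseteq> V - {x}" using K(1) in_quotient_imp_subset[OF eqx] by blast
    have nd: "\<not> distinguishes H s C" if s: "s \<in> V - C" for s
    proof (cases "s = x")
      case True
      have "(s, a, b) \<in> H" if "a \<in> C" "b \<in> C" for a b
        using class_in[OF hr assms(4) K(1)] K(2) that True by blast
      then show ?thesis unfolding distinguishes_def by blast
    next
      case False
      then have "refine V H P s = P" using s stab by blast
      then have "C \<in> refine V H P s" using C by simp
      then obtain K' where K': "K' \<in> (V - {s}) // H_at H s" "C \<subseteq> K'"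
      proof (rule refine_cases)
        assume "s \<in> C" then show ?thesis using s by blast
      next
        fix C0 K0 assume h: "C = C0 \<inter> K0" "K0 \<in> (V - {s}) // H_at H s"
        assume th: "\<And>K'. K' \<in> (V - {s}) // H_at H s \<Longrightarrow> C \<subseteq> K' \<Longrightarrow> thesis"
        show thesis using th[OF h(2)] h(1) by blast
      qed
      have sV: "s \<in> V" using s by blast
      have "(s, a, b) \<in> H" if "a \<in> C" "b \<in> C" for a b
        using class_in[OF hr sV K'(1)] K'(2) that by blast
      then show ?thesis unfolding distinguishes_def by blast
    qed
    have "C \<noteq> {}" using neP C by blast
    moreover have "C \<subseteq> V" using K(2) KV by blast
    ultimately show "homogeneous_set V H C" unfolding homogeneous_set_def using nd by blast
    show "x \<notin> C" using K(2) KV by blast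
  qed
  show ?thesis
  proof
    show "P \<subseteq> MHS V H x"
    proof
      fix C assume C: "C \<in> P"
      have max: "M' = C" if M': "homogeneous_set V H M' \<and> x \<notin> M' \<and> C \<subseteq> M'" for M'
      proof -
        obtain C'' where C'': "C'' \<in> P" "M' \<subseteq> C''" using hmP M' by blast
        have "C \<noteq> {}" using neP C by blast
        then have "C'' \<inter> C \<noteq> {}" using M' C''(2) by blast
        then have "C'' = C" using dP C C''(1) by blast
        then show ?thesis using M' C''(2) by blast
      qed
      show "C \<in> MHS V H x" unfolding MHS_def
        using homC[OF C] max by (simp only: mem_Collect_eq) blast
    qed
  next
    show "MHS V H x \<subseteq> P"
    proof
      fix M assume M: "M \<in> MHS V H x"
      then have Mh: "homogeneous_set V H M" "x \<notin> M"
        and Mmax: "\<And>M'. homogeneous_set V H M' \<and> x \<notin> M' \<and> M \<subseteq> M' \<Longrightarrow> M' = M"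
        unfolding MHS_def by blast+
      obtain C where C: "C \<in> P" "M \<subseteq> C" using hmP Mh by blast
      have "C = M" using Mmax homC[OF C(1)] C(2) by blast
      then show "M \<in> P" using C by simp
    qed
  qed
qed

end
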